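(* Let $G$ be the graph associated with a succinct representation $\mathcal{G}=(H,\{(\ell_i,S_i)\mid 1\le i\le r\})$. Then $\mathcal{I}(G)\ge \sum_{i=1}^r\gamma(\ell_i)$, where $\gamma(\ell)=\ell^2/2$ if $\ell$ is even and $\gamma(\ell)=(\ell^2-1)/2$ if $\ell$ is odd.
   Context: All graphs are finite, simple and undirected. For an ordering $\sigma$ of $V(G)$ and $v\in V(G)$, $N_L(v,\sigma)$ and $N_R(v,\sigma)$ are the sets of neighbours of $v$ preceding and following $v$; $\mathcal{I}(v,\sigma)=\big||N_L(v,\sigma)|-|N_R(v,\sigma)|\big|$, $\mathcal{I}(\sigma)=\sum_v\mathcal{I}(v,\sigma)$, and $\mathcal{I}(G)=\min_\sigma\mathcal{I}(\sigma)$. A succinct representation is a tuple $(H,\{(\ell_i,S_i)\mid 1\le i\le r\})$ where $H$ is a graph, each $\ell_i$ is a positive integer and $S_i\subseteq V(H)$; its associated graph $G$ has vertex set $V(H)\cup C_1\cup\dots\cup C_r$ (pairwise disjoint, $|C_i|=\ell_i$), with edges: those of $H$ on $V(H)$, all edges within each $C_i$, no edges between distinct $C_i$'s, and $v\in V(H)$ adjacent to every vertex of $C_i$ iff $v\in S_i$ (and to none otherwise). *)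

theory Defs
  imports Main
begin

definition simple_graph :: "'v set \<Rightarrow> 'v set set \<Rightarrow> bool" where
  "simple_graph V E \<longleftrightarrow> finite V \<and>
     (\<forall>e\<in>E. \<exists>u v. e = {u, v} \<and> u \<noteq> v \<and> u \<in> V \<and> v \<in> V)"

definition orderings :: "'v set \<Rightarrow> 'v list set" where
  "orderings V = {xs. distinct xs \<and> set xs = V}"

definition precedes :: "'v list \<Rightarrow> 'v \<Rightarrow> 'v \<Rightarrow> bool" where
  "precedes xs u v \<longleftrightarrow> (\<exists>i j. i < j \<and> j < length xs \<and> xs ! i = u \<and> xs ! j = v)"

definition left_nbrs :: "'v set set \<Rightarrow> 'v list \<Rightarrow> 'v \<Rightarrow> 'v set" where
  "left_nbrs E xs v = {u \<in> set xs. {u, v} \<in> E \<and> precedes xs u v}"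

definition right_nbrs :: "'v set set \<Rightarrow> 'v list \<Rightarrow> 'v \<Rightarrow> 'v set" where
  "right_nbrs E xs v = {u \<in> set xs. {u, v} \<in> E \<and> precedes xs v u}"

definition vertex_imbalance :: "'v set set \<Rightarrow> 'v list \<Rightarrow> 'v \<Rightarrow> int" where
  "vertex_imbalance E xs v = \<bar>int (card (left_nbrs E xs v)) - int (card (right_nbrs E xs v))\<bar>"

definition ordering_imbalance :: "'v set set \<Rightarrow> 'v list \<Rightarrow> int" where
  "ordering_imbalance E xs = (\<Sum>v\<in>set xs. vertex_imbalance E xs v)"

definition graph_imbalance :: "'v set \<Rightarrow> 'v set set \<Rightarrow> int" where
  "graph_imbalance V E = Min (ordering_imbalance E ` orderings V)"

(* Succinct representation (H, [(l_1,S_1),...,(l_r,S_r)]) with H = (VH, EH).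
   Associated graph on vertex type 'a + nat \<times> nat: Inl v for v in V(H),
   Inr (i, j) with j < l_i for the clique C_i (indices i < r, 0-based). *)
definition succinct_rep :: "'a set \<Rightarrow> 'a set set \<Rightarrow> (nat \<times> 'a set) list \<Rightarrow> bool" where
  "succinct_rep VH EH ls \<longleftrightarrow> simple_graph VH EH \<and>
     (\<forall>i < length ls. fst (ls ! i) > 0 \<and> snd (ls ! i) \<subseteq> VH)"

definition assoc_vertices :: "'a set \<Rightarrow> (nat \<times> 'a set) list \<Rightarrow> ('a + nat \<times> nat) set" where
  "assoc_vertices VH ls = Inl ` VH \<union> {Inr (i, j) | i j. i < length ls \<and> j < fst (ls ! i)}"

definition assoc_edges :: "'a set set \<Rightarrow> (nat \<times> 'a set) list \<Rightarrow> ('a + nat \<times> nat) set set" where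
  "assoc_edges EH ls =
     (\<lambda>e. Inl ` e) ` EH
     \<union> {{Inr (i, j), Inr (i, k)} | i j k. i < length ls \<and> j < fst (ls ! i) \<and> k < fst (ls ! i) \<and> j \<noteq> k}
     \<union> {{Inl v, Inr (i, j)} | v i j. i < length ls \<and> v \<in> snd (ls ! i) \<and> j < fst (ls ! i)}"

definition gamma :: "nat \<Rightarrow> nat" where
  "gamma l = (if even l then l^2 div 2 else (l^2 - 1) div 2)"

end

theory Submission
  imports Defs
begin

lemma prec_in: "precedes xs u v \<Longrightarrow> u \<in> set xs \<and> v \<in> set xs"
  unfolding precedes_def by auto

lemma prec_irrefl: "distinct xs \<Longrightarrow> \<not> precedes xs v v"
  unfolding precedes_def using nth_eq_iff_index_eq by fastforce

lemma prec_trans: "distinct xs \<Longrightarrow> precedes xs u v \<Longrightarrow> precedes xs v w \<Longrightarrow> precedes xs u w"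
  unfolding precedes_def
proof (elim exE conjE)
  fix i j i' j'
  assume d: "distinct xs" and h: "i < j" "j < length xs" "xs ! i = u" "xs ! j = v"
     "i' < j'" "j' < length xs" "xs ! i' = v" "xs ! j' = w"
  then have "j = i'" using nth_eq_iff_index_eq by fastforce
  then show "\<exists>i j. i < j \<and> j < length xs \<and> xs ! i = u \<and> xs ! j = w"
    using h by (intro exI[of _ i] exI[of _ j']) auto
qed

lemma prec_asym: "distinct xs \<Longrightarrow> precedes xs u v \<Longrightarrow> \<not> precedes xs v u"
  using prec_trans prec_irrefl by metis

lemma sorted_prec: "sorted_wrt (precedes xs) xs"
  unfolding sorted_wrt_iff_nth_less precedes_def by blast

lemma key:
  assumes dist: "distinct xs" and puw: "precedes xs u w" and Euw: "{u,w} \<in> E"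
    and sym: "\<forall>x\<in>set xs. x \<noteq> u \<and> x \<noteq> w \<longrightarrow> ({x,u} \<in> E \<longleftrightarrow> {x,w} \<in> E)"
    and Bsub: "B \<subseteq> {x\<in>set xs. precedes xs u x \<and> precedes xs x w \<and> {x,u} \<in> E}"
  shows "int (card (left_nbrs E xs w)) - int (card (right_nbrs E xs w))
         - (int (card (left_nbrs E xs u)) - int (card (right_nbrs E xs u))) \<ge> 2 + 2 * int (card B)"
proof -
  have fin: "finite (set xs)" by simp
  have finB: "finite B" using finite_subset[OF Bsub] by simp
  have finL: "finite (left_nbrs E xs v)" for v unfolding left_nbrs_def by simp
  have finR: "finite (right_nbrs E xs v)" for v unfolding right_nbrs_def by simp
  have uin: "u \<in> set xs" and win: "w \<in> set xs" using prec_in[OF puw] by auto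
  have s1: "left_nbrs E xs u \<union> {u} \<union> B \<subseteq> left_nbrs E xs w"
  proof -
    have "x \<in> left_nbrs E xs w" if "x \<in> left_nbrs E xs u" for x
    proof -
      have x: "x \<in> set xs" "{x,u} \<in> E" "precedes xs x u" using that unfolding left_nbrs_def by auto
      have "x \<noteq> u" using prec_irrefl[OF dist] x(3) by blast
      moreover have "x \<noteq> w" using prec_asym[OF dist puw] x(3) by blast
      ultimately have "{x,w} \<in> E" using sym x by blast
      moreover have "precedes xs x w" using prec_trans[OF dist x(3) puw] .
      ultimately show ?thesis using x unfolding left_nbrs_def by auto
    qed
    moreover have "u \<in> left_nbrs E xs w" using uin Euw puw unfolding left_nbrs_def by auto
    moreover have "x \<in> left_nbrs E xs w" if "x \<in> B" for x
    proof -
      have x: "x \<in> set xs" "precedes xs u x" "precedes xs x w" "{x,u} \<in> E" using that Bsub by auto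
      have "x \<noteq> u" using prec_irrefl[OF dist] x(2) by blast
      moreover have "x \<noteq> w" using prec_irrefl[OF dist] x(3) by blast
      ultimately have "{x,w} \<in> E" using sym x by blast
      then show ?thesis using x unfolding left_nbrs_def by auto
    qed
    ultimately show ?thesis by blast
  qed
  have d1a: "left_nbrs E xs u \<inter> B = {}"
  proof (rule ccontr)
    assume "left_nbrs E xs u \<inter> B \<noteq> {}"
    then obtain x where "precedes xs x u" "precedes xs u x" using Bsub unfolding left_nbrs_def by blast
    then show False using prec_asym[OF dist] by blast
  qed
  have d1b: "u \<notin> left_nbrs E xs u" "u \<notin> B"
    using Bsub prec_irrefl[OF dist, of u] unfolding left_nbrs_def by auto
  note d1 = d1a d1b
  have c1: "card (left_nbrs E xs u \<union> {u} \<union> B) = card (left_nbrs E xs u) + 1 + card B"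
    using d1 finL finB by (simp add: card_Un_disjoint card_insert_if)
  have i1: "card (left_nbrs E xs u) + 1 + card B \<le> card (left_nbrs E xs w)"
    using card_mono[OF finL s1] c1 by linarith
  have s2: "right_nbrs E xs w \<union> {w} \<union> B \<subseteq> right_nbrs E xs u"
  proof -
    have "x \<in> right_nbrs E xs u" if "x \<in> right_nbrs E xs w" for x
    proof -
      have x: "x \<in> set xs" "{x,w} \<in> E" "precedes xs w x" using that unfolding right_nbrs_def by auto
      have "x \<noteq> w" using prec_irrefl[OF dist] x(3) by blast
      moreover have "x \<noteq> u" using prec_asym[OF dist puw] x(3) by blast
      ultimately have "{x,u} \<in> E" using sym x by blast
      moreover have "precedes xs u x" using prec_trans[OF dist puw x(3)] .
      ultimately show ?thesis using x unfolding right_nbrs_def by auto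
    qed
    moreover have "w \<in> right_nbrs E xs u"
    proof -
      have "{w,u} = {u,w}" by (rule insert_commute)
      then show ?thesis using win Euw puw unfolding right_nbrs_def by simp
    qed
    moreover have "x \<in> right_nbrs E xs u" if "x \<in> B" for x
      using that Bsub unfolding right_nbrs_def by auto
    ultimately show ?thesis by blast
  qed
  have d2a: "right_nbrs E xs w \<inter> B = {}"
  proof (rule ccontr)
    assume "right_nbrs E xs w \<inter> B \<noteq> {}"
    then obtain x where "precedes xs w x" "precedes xs x w" using Bsub unfolding right_nbrs_def by blast
    then show False using prec_asym[OF dist] by blast
  qed
  have d2b: "w \<notin> right_nbrs E xs w" "w \<notin> B"
    using Bsub prec_irrefl[OF dist, of w] unfolding right_nbrs_def by auto
  note d2 = d2a d2b
  have c2: "card (right_nbrs E xs w \<union> {w} \<union> B) = card (right_nbrs E xs w) + 1 + card B"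
    using d2 finR finB by (simp add: card_Un_disjoint card_insert_if)
  have i2: "card (right_nbrs E xs w) + 1 + card B \<le> card (right_nbrs E xs u)"
    using card_mono[OF finR s2] c2 by linarith
  show ?thesis using i1 i2 by linarith
qed

lemma sum_arith: "(\<Sum>k<m. (2 * int l - 2 - 4 * int k)) = int m * (2 * int l - 2) - 2 * int m * (int m - 1)"
  by (induction m) (auto simp: algebra_simps)

lemma gamma_arith: "(\<Sum>k<l div 2. (2 * int l - 2 - 4 * int k)) = int (gamma l)"
proof -
  obtain m where "l = 2*m \<or> l = 2*m+1" by (metis oddE evenE)
  then show ?thesis
  proof
    assume l: "l = 2*m"
    have "gamma l = 2*m*m" unfolding gamma_def l by (simp add: power2_eq_square)
    then show ?thesis unfolding sum_arith using l by (simp add: algebra_simps)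
  next
    assume l: "l = 2*m+1"
    have "l^2 - 1 = 4*m*m + 4*m" unfolding l by (simp add: power2_eq_square algebra_simps)
    then have "gamma l = 2*m*m + 2*m" unfolding gamma_def using l by simp
    then show ?thesis unfolding sum_arith using l by (simp add: algebra_simps)
  qed
qed

lemma pair_sum:
  fixes f :: "nat \<Rightarrow> int"
  assumes nn: "\<And>j. f j \<ge> 0"
    and pr: "\<And>k. 2*k+1 < l \<Longrightarrow> f k + f (l-1-k) \<ge> 2 * int l - 2 - 4 * int k"
  shows "(\<Sum>j<l. f j) \<ge> int (gamma l)"
proof -
  let ?A = "{..<l div 2}"
  let ?B = "(\<lambda>k. l-1-k) ` ?A"
  have inj: "inj_on (\<lambda>k. l-1-k) ?A" by (rule inj_onI) auto
  have disj: "?A \<inter> ?B = {}" by auto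
  have sub: "?A \<union> ?B \<subseteq> {..<l}" by auto
  have "(\<Sum>j<l. f j) \<ge> sum f (?A \<union> ?B)"
    by (rule sum_mono2) (use sub nn in auto)
  also have "sum f (?A \<union> ?B) = sum f ?A + sum f ?B"
    by (rule sum.union_disjoint) (use disj in auto)
  also have "sum f ?B = (\<Sum>k\<in>?A. f (l-1-k))"
    using sum.reindex[OF inj] by simp
  finally have "(\<Sum>j<l. f j) \<ge> (\<Sum>k\<in>?A. f k + f (l-1-k))" by (simp add: sum.distrib)
  moreover have "(\<Sum>k\<in>?A. f k + f (l-1-k)) \<ge> (\<Sum>k\<in>?A. (2 * int l - 2 - 4 * int k))"
    by (rule sum_mono) (rule pr, auto)
  ultimately show ?thesis using gamma_arith by simp
qed


lemma clique_bound:
  assumes dist: "distinct xs" and Csub: "C \<subseteq> set xs" and cardC: "card C = l"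
    and cl: "\<And>u w. u \<in> C \<Longrightarrow> w \<in> C \<Longrightarrow> u \<noteq> w \<Longrightarrow>
               {u,w} \<in> E \<and> (\<forall>x\<in>set xs. x \<noteq> u \<and> x \<noteq> w \<longrightarrow> ({x,u} \<in> E \<longleftrightarrow> {x,w} \<in> E))"
  shows "(\<Sum>v\<in>C. vertex_imbalance E xs v) \<ge> int (gamma l)"
proof -
  define cs where "cs = filter (\<lambda>x. x \<in> C) xs"
  have dcs: "distinct cs" unfolding cs_def using dist by simp
  have scs: "set cs = C" unfolding cs_def using Csub by auto
  have lcs: "length cs = l" using distinct_card[OF dcs] scs cardC by simp
  have srt: "sorted_wrt (precedes xs) cs" unfolding cs_def by (rule sorted_wrt_filter[OF sorted_prec])
  have prc: "precedes xs (cs ! i) (cs ! j)" if "i < j" "j < l" for i j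
    using srt that lcs unfolding sorted_wrt_iff_nth_less by blast
  have inC: "cs ! i \<in> C" if "i < l" for i using that lcs scs nth_mem by blast
  define d where "d v = int (card (left_nbrs E xs v)) - int (card (right_nbrs E xs v))" for v
  define f where "f j = vertex_imbalance E xs (cs ! j)" for j
  have fd: "f j = \<bar>d (cs ! j)\<bar>" for j unfolding f_def d_def vertex_imbalance_def by simp
  have inj: "inj_on (nth cs) {..<l}" using inj_on_nth[OF dcs] lcs by simp
  have img: "nth cs ` {..<l} = C" using scs lcs by (auto simp: set_conv_nth)
  have "(\<Sum>v\<in>C. vertex_imbalance E xs v) = (\<Sum>j<l. f j)"
    unfolding f_def using sum.reindex[OF inj, of "vertex_imbalance E xs"] img by simp
  also have "(\<Sum>j<l. f j) \<ge> int (gamma l)"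
  proof (rule pair_sum)
    show "f j \<ge> 0" for j using fd by simp
    fix k assume k: "2*k+1 < l"
    let ?u = "cs ! k" and ?w = "cs ! (l-1-k)"
    let ?B = "nth cs ` {k<..<l-1-k}"
    have kk: "k < l-1-k" "l-1-k < l" using k by auto
    have puw: "precedes xs ?u ?w" using prc kk by blast
    have neq: "?u \<noteq> ?w" using prec_irrefl[OF dist] puw by metis
    have uC: "?u \<in> C" and wC: "?w \<in> C" using inC kk by auto
    have cuw: "{?u,?w} \<in> E \<and> (\<forall>x\<in>set xs. x \<noteq> ?u \<and> x \<noteq> ?w \<longrightarrow> ({x,?u} \<in> E \<longleftrightarrow> {x,?w} \<in> E))"
      using cl[OF uC wC neq] .
    have Bsub: "?B \<subseteq> {x\<in>set xs. precedes xs ?u x \<and> precedes xs x ?w \<and> {x,?u} \<in> E}"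
    proof
      fix x assume "x \<in> ?B"
      then obtain j where j: "k < j" "j < l-1-k" "x = cs ! j" by auto
      have xC: "x \<in> C" using inC j kk by simp
      have p1: "precedes xs ?u x" using prc j kk by simp
      have p2: "precedes xs x ?w" using prc j kk by simp
      have "x \<noteq> ?u" using prec_irrefl[OF dist] p1 by metis
      then have "{x,?u} \<in> E" using cl[OF xC uC] by blast
      then show "x \<in> {x\<in>set xs. precedes xs ?u x \<and> precedes xs x ?w \<and> {x,?u} \<in> E}"
        using xC Csub p1 p2 by auto
    qed
    have cB: "card ?B = l-1-k - Suc k"
    proof -
      have "inj_on (nth cs) {k<..<l-1-k}" by (rule inj_on_nth[OF dcs]) (use lcs kk in auto)
      then show ?thesis by (simp add: card_image)
    qed
    have "d ?w - d ?u \<ge> 2 + 2 * int (card ?B)"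
      unfolding d_def using key[OF dist puw conjunct1[OF cuw] conjunct2[OF cuw] Bsub] by simp
    moreover have "int (card ?B) = int l - 2 - 2 * int k" using cB k by simp
    ultimately have "d ?w - d ?u \<ge> 2 * int l - 2 - 4 * int k" by simp
    then show "f k + f (l-1-k) \<ge> 2 * int l - 2 - 4 * int k" unfolding fd by simp
  qed
  finally show ?thesis .
qed

lemma edge_Inr:
  assumes "i < length ls" "j < fst (ls ! i)"
  shows "({x, Inr (i,j)} \<in> assoc_edges EH ls) \<longleftrightarrow>
    ((\<exists>b. x = Inr (i,b) \<and> b < fst (ls ! i) \<and> b \<noteq> j) \<or> (\<exists>v. x = Inl v \<and> v \<in> snd (ls ! i)))"
proof
  assume "{x, Inr (i,j)} \<in> assoc_edges EH ls"
  then consider (a) e where "{x, Inr (i,j)} = Inl ` e"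
    | (b) i' j' k where "{x, Inr (i,j)} = {Inr (i', j'), Inr (i', k)}" "i' < length ls" "j' < fst (ls ! i')" "k < fst (ls ! i')" "j' \<noteq> k"
    | (c) v i' j' where "{x, Inr (i,j)} = {Inl v, Inr (i', j')}" "i' < length ls" "v \<in> snd (ls ! i')" "j' < fst (ls ! i')"
    unfolding assoc_edges_def by blast
  then show "(\<exists>b. x = Inr (i,b) \<and> b < fst (ls ! i) \<and> b \<noteq> j) \<or> (\<exists>v. x = Inl v \<and> v \<in> snd (ls ! i))"
  proof cases
    case (a e)
    have "Inr (i,j) \<in> Inl ` e" using a by blast
    then show ?thesis by auto
  next
    case (b i' j' k)
    then show ?thesis by (auto simp: doubleton_eq_iff)
  next
    case (c v i' j')
    then show ?thesis by (auto simp: doubleton_eq_iff)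
  qed
next
  assume "(\<exists>b. x = Inr (i,b) \<and> b < fst (ls ! i) \<and> b \<noteq> j) \<or> (\<exists>v. x = Inl v \<and> v \<in> snd (ls ! i))"
  then show "{x, Inr (i,j)} \<in> assoc_edges EH ls"
  proof
    assume "\<exists>b. x = Inr (i,b) \<and> b < fst (ls ! i) \<and> b \<noteq> j"
    then obtain b where b: "x = Inr (i,b)" "b < fst (ls ! i)" "b \<noteq> j" by blast
    then show ?thesis unfolding assoc_edges_def using assms by blast
  next
    assume "\<exists>v. x = Inl v \<and> v \<in> snd (ls ! i)"
    then obtain v where v: "x = Inl v" "v \<in> snd (ls ! i)" by blast
    then show ?thesis unfolding assoc_edges_def using assms by blast
  qed
qed

theorem proposition1:
  fixes VH :: "'a set" and EH :: "'a set set" and ls :: "(nat \<times> 'a set) list"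
  assumes "succinct_rep VH EH ls"
  shows "graph_imbalance (assoc_vertices VH ls) (assoc_edges EH ls)
           \<ge> (\<Sum>i<length ls. int (gamma (fst (ls ! i))))"
proof -
  define V where "V = assoc_vertices VH ls"
  define E where "E = assoc_edges EH ls"
  define C where "C i = ((\<lambda>j. Inr (i,j)) ` {..<fst (ls ! i)} :: ('a + nat \<times> nat) set)" for i :: nat
  define n where "n = length ls"
  have finVH: "finite VH" using assms unfolding succinct_rep_def simple_graph_def by blast
  have Veq: "V = Inl ` VH \<union> (\<Union>i<n. C i)" unfolding V_def assoc_vertices_def C_def n_def by auto
  have finC: "finite (C i)" for i unfolding C_def by simp
  have finV: "finite V" using Veq finVH finC by simp
  have finO: "finite (orderings V)"
    using finite_subset_distinct[OF finV] finite_subset unfolding orderings_def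
    by (metis (mono_tags, lifting) Collect_mono order_refl)
  obtain xs0 where "set xs0 = V" "distinct xs0" using finite_distinct_list[OF finV] by blast
  then have neO: "orderings V \<noteq> {}" unfolding orderings_def by blast
  have bound: "ordering_imbalance E xs \<ge> (\<Sum>i<n. int (gamma (fst (ls ! i))))"
    if xs: "xs \<in> orderings V" for xs
  proof -
    have sx: "set xs = V" and dx: "distinct xs" using xs unfolding orderings_def by auto
    have nn: "vertex_imbalance E xs v \<ge> 0" for v unfolding vertex_imbalance_def by simp
    have h1: "ordering_imbalance E xs = (\<Sum>v\<in>V. vertex_imbalance E xs v)"
      unfolding ordering_imbalance_def sx ..
    have h2: "(\<Sum>v\<in>V. vertex_imbalance E xs v) \<ge> (\<Sum>v\<in>(\<Union>i<n. C i). vertex_imbalance E xs v)"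
      by (rule sum_mono2[OF finV]) (use Veq nn in auto)
    have h3: "(\<Sum>v\<in>(\<Union>i<n. C i). vertex_imbalance E xs v) = (\<Sum>i<n. \<Sum>v\<in>C i. vertex_imbalance E xs v)"
      by (rule sum.UNION_disjoint) (auto simp: finC C_def)
    have h4: "(\<Sum>i<n. \<Sum>v\<in>C i. vertex_imbalance E xs v) \<ge> (\<Sum>i<n. int (gamma (fst (ls ! i))))"
    proof (rule sum_mono)
      fix i assume "i \<in> {..<n}"
      then have i: "i < length ls" unfolding n_def by simp
      show "(\<Sum>v\<in>C i. vertex_imbalance E xs v) \<ge> int (gamma (fst (ls ! i)))"
      proof (rule clique_bound[OF dx])
        show "C i \<subseteq> set xs" using sx Veq i n_def by auto
        have "inj_on (\<lambda>j. Inr (i,j) :: 'a + nat \<times> nat) {..<fst (ls ! i)}" by (rule inj_onI) auto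
        then show "card (C i) = fst (ls ! i)" unfolding C_def by (simp add: card_image)
        fix u w assume uC: "u \<in> C i" and wC: "w \<in> C i" and uw: "u \<noteq> w"
        obtain a where a: "u = Inr (i,a)" "a < fst (ls ! i)" using uC unfolding C_def by auto
        obtain b where b: "w = Inr (i,b)" "b < fst (ls ! i)" using wC unfolding C_def by auto
        have ab: "a \<noteq> b" using a b uw by auto
        have "{u,w} \<in> E" unfolding E_def a(1) b(1) using edge_Inr[OF i b(2), of "Inr (i,a)" EH] a ab by auto
        moreover have "\<forall>x\<in>set xs. x \<noteq> u \<and> x \<noteq> w \<longrightarrow> ({x,u} \<in> E \<longleftrightarrow> {x,w} \<in> E)"
          unfolding E_def a(1) b(1) using edge_Inr[OF i a(2)] edge_Inr[OF i b(2)] by auto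
        ultimately show "{u,w} \<in> E \<and> (\<forall>x\<in>set xs. x \<noteq> u \<and> x \<noteq> w \<longrightarrow> ({x,u} \<in> E \<longleftrightarrow> {x,w} \<in> E))" by blast
      qed
    qed
    show ?thesis using h1 h2 h3 h4 by linarith
  qed
  have "Min (ordering_imbalance E ` orderings V) \<in> ordering_imbalance E ` orderings V"
    using finO neO by (intro Min_in) auto
  then obtain xs where "xs \<in> orderings V" "graph_imbalance V E = ordering_imbalance E xs"
    unfolding graph_imbalance_def by auto
  then show ?thesis using bound unfolding V_def E_def n_def by simp
qed

end
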